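(* Let $n$ be a positive odd integer and $m>1$ an odd integer, and define \[ S(n,m)=\sum_{j=0}^{(n-1)/2}(-1)^j\sin\frac{\pi(2j+1)}{2n}\Bigl(\cos\frac{\pi(2j+1)}{2n}\Bigr)^{m-1}. \] Then \[ \int_0^1\frac{\sin\bigl(n\sin^{-1}\sqrt t\bigr)\sinh\bigl(n\sinh^{-1}\sqrt t\bigr)}{\cos\bigl(2n\sin^{-1}\sqrt t\bigr)+\cosh\bigl(2n\sinh^{-1}\sqrt t\bigr)}\cdot\frac{\sin\bigl(m\sin^{-1}t\bigr)}{\sqrt{1-t^2}}\,dt=\frac{\pi}{4n}S(n,m). \] *)

theory Defs
  imports "HOL-Analysis.Analysis"
begin

definition S :: "nat \<Rightarrow> nat \<Rightarrow> real" where
  "S n m = (\<Sum>j=0..(n - 1) div 2. (-1::real)^j * sin (pi * (2 * real j + 1) / (2 * real n))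
              * (cos (pi * (2 * real j + 1) / (2 * real n))) ^ (m - 1))"

end

theory Submission
  imports Defs "HOL-Computational_Algebra.Polynomial"
begin


definition Dn :: "real \<Rightarrow> real \<Rightarrow> real" where
  "Dn c x = 1 - 2*c*cos x + c^2"

lemma ccos_le: "(c::real) * cos x \<le> \<bar>c\<bar>"
proof -
  have "\<bar>c * cos x\<bar> \<le> \<bar>c\<bar>" by (simp add: abs_mult mult_left_le)
  thus ?thesis by linarith
qed

lemma Dn_pos: assumes "\<bar>c::real\<bar> < 1" shows "Dn c x > 0"
proof -
  have "c * cos x \<le> \<bar>c\<bar>" by (rule ccos_le)
  hence "Dn c x \<ge> (1 - \<bar>c\<bar>)^2" unfolding Dn_def by (simp add: power2_eq_square algebra_simps)
  moreover have "(1 - \<bar>c\<bar>)^2 > 0" using assms by simp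
  ultimately show ?thesis by linarith
qed

lemma one_minus_ccos_pos: assumes "\<bar>c::real\<bar> < 1" shows "1 - c * cos x > 0"
  using ccos_le[of c x] assms by linarith

lemma Dn_eq: fixes c :: real shows "(1 - c * cos x)^2 + (c * sin x)^2 = Dn c x"
proof -
  have h: "(c * sin x)^2 + (c * cos x)^2 = c^2"
  proof -
    have "c^2 * ((sin x)^2 + (cos x)^2) = c^2" by simp
    thus ?thesis by (simp only: power_mult_distrib distrib_left)
  qed
  have "(1 - c * cos x)^2 = 1 - 2*c*cos x + (c * cos x)^2" by (simp add: power2_eq_square algebra_simps)
  then show ?thesis using h unfolding Dn_def by linarith
qed

lemma poisson_deriv:
  assumes "\<bar>c::real\<bar> < 1"
  shows "((\<lambda>x. x + 2 * arctan (c * sin x / (1 - c * cos x))) has_real_derivative (1 - c^2) / Dn c x) (at x)"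
proof -
  have q: "1 - c * cos x \<noteq> 0" using one_minus_ccos_pos[OF assms, of x] by simp
  have d: "Dn c x \<noteq> 0" using Dn_pos[OF assms, of x] by simp
  have e: "inverse (1 + (c * sin x / (1 - c * cos x))\<^sup>2) = (1 - c * cos x)^2 / Dn c x"
    using q d Dn_eq[of c x] by (simp add: field_simps)
  have n: "cos x * c * (1 - c * cos x) - c * sin x * (sin x * c) = c * cos x - c^2"
    using Dn_eq[of c x] unfolding Dn_def by (simp add: power2_eq_square algebra_simps)
  have alg: "1 + inverse (1 + (c * sin x / (1 - c * cos x))\<^sup>2) *
    (cos x * c * (1 - c * cos x) - c * sin x * (sin x * c)) * 2 /
    ((1 - c * cos x) * (1 - c * cos x)) = (1 - c^2) / Dn c x"
  proof -
    have "inverse (1 + (c * sin x / (1 - c * cos x))\<^sup>2) *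
      (cos x * c * (1 - c * cos x) - c * sin x * (sin x * c)) * 2 /
      ((1 - c * cos x) * (1 - c * cos x)) = 2 * (c * cos x - c^2) / Dn c x"
      unfolding e n using q by (simp add: power2_eq_square)
    moreover have "1 + 2 * (c * cos x - c^2) / Dn c x = (Dn c x + 2 * (c * cos x - c^2)) / Dn c x"
      using d by (simp add: field_simps)
    moreover have "Dn c x + 2 * (c * cos x - c^2) = 1 - c^2" by (simp add: Dn_def)
    ultimately show ?thesis by simp
  qed
  show ?thesis unfolding Dn_def[symmetric]
    apply (auto intro!: derivative_eq_intros)
    using q alg by auto
qed

definition PoisPhi :: "real \<Rightarrow> real \<Rightarrow> real" where
  "PoisPhi c x = x + 2 * arctan (c * sin x / (1 - c * cos x))"

lemma poisson_deriv':
  assumes "\<bar>c::real\<bar> < 1"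
  shows "(PoisPhi c has_real_derivative (1 - c^2) / Dn c x) (at x)"
  unfolding PoisPhi_def[abs_def] by (rule poisson_deriv[OF assms])

lemma poisson_deriv_within:
  assumes "\<bar>c::real\<bar> < 1"
  shows "(PoisPhi c has_real_derivative (1 - c^2) / Dn c x) (at x within s)"
  using has_field_derivative_at_within[OF poisson_deriv'[OF assms]] .

lemma ftc_real:
  fixes F f :: "real \<Rightarrow> real"
  assumes "a \<le> b" "\<And>x. (F has_real_derivative f x) (at x)"
  shows "(f has_integral F b - F a) {a..b}"
  by (rule fundamental_theorem_of_calculus)
    (auto simp: has_real_derivative_iff_has_vector_derivative[symmetric] intro: has_field_derivative_at_within assms)

lemma deriv_sin2: "((\<lambda>x. (x - sin (2*x)/2)/2) has_real_derivative sin x * sin x) (at x)"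
proof (rule DERIV_cong)
  show "((\<lambda>x. (x - sin (2*x)/2)/2) has_real_derivative (1 - cos (2*x) * 2 / 2)/2) (at x)"
    by (auto intro!: derivative_eq_intros)
  have "cos (2*x) = 1 - 2*(sin x * sin x)" by (simp add: cos_double_sin power2_eq_square)
  then show "(1 - cos (2*x) * 2 / 2)/2 = sin x * sin x" by (simp add: field_simps)
qed

lemma deriv_sinsin: fixes a :: real assumes a1: "a - 1 \<noteq> 0" "a + 1 \<noteq> 0"
  shows "((\<lambda>x. (sin ((a-1)*x)/(a-1) - sin ((a+1)*x)/(a+1))/2) has_real_derivative sin x * sin (a * x)) (at x)"
proof (rule DERIV_cong)
  show "((\<lambda>x. (sin ((a-1)*x)/(a-1) - sin ((a+1)*x)/(a+1))/2) has_real_derivative (cos ((a-1)*x) - cos ((a+1)*x))/2) (at x)"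
    using a1 by (auto intro!: derivative_eq_intros)
  show "(cos ((a-1)*x) - cos ((a+1)*x))/2 = sin x * sin (a * x)"
    by (simp add: algebra_simps cos_add cos_diff)
qed

lemma sinsin_int:
  assumes "m \<ge> 1"
  shows "((\<lambda>x. sin x * sin (real m * x)) has_integral (if m = 1 then pi/2 else 0)) {0..pi}"
proof (cases "m = 1")
  case True
  have "((\<lambda>x. sin x * sin x) has_integral (pi/2)) {0..pi}"
    using ftc_real[of 0 pi "\<lambda>x. (x - sin (2*x)/2)/2" "\<lambda>x. sin x * sin x"] deriv_sin2 by simp
  thus ?thesis using True by simp
next
  case False
  with assms have m2: "m \<ge> 2" by simp
  define a where "a = real m"
  have a1: "a - 1 \<noteq> 0" "a + 1 \<noteq> 0" using m2 by (auto simp: a_def)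
  have e1: "a - 1 = real (m - 1)" "a + 1 = real (m+1)" using m2 by (auto simp: a_def)
  have s0: "sin ((a-1)*pi) = 0" "sin ((a+1)*pi) = 0" unfolding e1 by (rule sin_npi)+
  have "((\<lambda>x. sin x * sin (a * x)) has_integral 0) {0..pi}"
    using ftc_real[of 0 pi "\<lambda>x. (sin ((a-1)*x)/(a-1) - sin ((a+1)*x)/(a+1))/2" "\<lambda>x. sin x * sin (a * x)"]
      deriv_sinsin[OF a1] s0 by simp
  thus ?thesis using False by (simp add: a_def)
qed

definition Pint :: "real \<Rightarrow> nat \<Rightarrow> real" where
  "Pint c m = integral {0..pi} (\<lambda>x. sin x / Dn c x * sin (real m * x))"

lemma cont_Dn: "continuous_on U (Dn c)"
  unfolding Dn_def by (intro continuous_intros)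

lemma cont_K:
  assumes "\<bar>c\<bar> < 1"
  shows "continuous_on U (\<lambda>x. sin x / Dn c x * sin (real m * x))"
proof -
  have "\<And>x. Dn c x \<noteq> 0" using Dn_pos[OF assms] by (metis less_irrefl)
  then show ?thesis by (intro continuous_intros cont_Dn) auto
qed

lemma K_int:
  assumes "\<bar>c\<bar> < 1"
  shows "((\<lambda>x. sin x / Dn c x * sin (real m * x)) has_integral Pint c m) {0..pi}"
  unfolding Pint_def by (rule integrable_integral, rule integrable_continuous_real, rule cont_K[OF assms])

lemma Pint_0: "Pint c 0 = 0"
  unfolding Pint_def by simp

lemma Pint_rec:
  assumes c: "\<bar>c\<bar> < 1" and m: "m \<ge> 1"
  shows "(1 + c^2) * Pint c m - c * (Pint c (m+1) + Pint c (m-1)) = (if m = 1 then pi/2 else 0)"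
proof -
  let ?h = "\<lambda>k x. sin x / Dn c x * sin (real k * x)"
  have A: "((\<lambda>x. (1 + c^2) * ?h m x - c * (?h (m+1) x + ?h (m-1) x)) has_integral
     (1 + c^2) * Pint c m - c * (Pint c (m+1) + Pint c (m-1))) {0..pi}"
    by (intro has_integral_diff has_integral_mult_right has_integral_add K_int c)
  have B: "(1 + c^2) * ?h m x - c * (?h (m+1) x + ?h (m-1) x) = sin x * sin (real m * x)" for x
  proof -
    have d: "Dn c x \<noteq> 0" using Dn_pos[OF c, of x] by simp
    have r: "real (m+1) * x = real m * x + x" "real (m-1) * x = real m * x - x" using m
      by (auto simp: algebra_simps of_nat_diff)
    have ss: "sin (real (m+1) * x) + sin (real (m-1) * x) = 2 * sin (real m * x) * cos x"
      unfolding r by (simp add: sin_add sin_diff)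
    have "(1 + c^2) * ?h m x - c * (?h (m+1) x + ?h (m-1) x)
        = sin x / Dn c x * ((1 + c^2) * sin (real m * x) - c * (sin (real (m+1) * x) + sin (real (m-1) * x)))"
      using d by (simp add: field_simps)
    also have "\<dots> = sin x / Dn c x * (sin (real m * x) * Dn c x)"
      unfolding ss by (simp add: Dn_def algebra_simps)
    also have "\<dots> = sin x * sin (real m * x)" using d by simp
    finally show ?thesis .
  qed
  have "((\<lambda>x. sin x * sin (real m * x)) has_integral
     (1 + c^2) * Pint c m - c * (Pint c (m+1) + Pint c (m-1))) {0..pi}"
    using A unfolding B .
  from has_integral_unique[OF this sinsin_int[OF m]] show ?thesis .
qed

lemma c2c4: fixes c A :: real assumes "c \<noteq> 0" shows "c^2 * A / (4 * c^4) = A / (4 * c^2)"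
  using assms by (simp add: power4_eq_xxxx power2_eq_square)

lemma Pint_1:
  assumes c: "\<bar>c\<bar> < 1"
  shows "Pint c 1 = pi/2"
proof (cases "c = 0")
  case True
  have "Dn c x = 1" for x using True by (simp add: Dn_def)
  then have "Pint c 1 = integral {0..pi} (\<lambda>x. sin x * sin (real 1 * x))" by (simp add: Pint_def)
  then show ?thesis using sinsin_int[of 1] by (simp add: integral_unique)
next
  case False
  let ?G = "\<lambda>x. (- (1 - c^2) * PoisPhi c x + (1 + c^2) * x + 2 * c * sin x) / (4 * c^2)"
  have der: "(?G has_real_derivative sin x / Dn c x * sin (real 1 * x)) (at x)" for x
  proof (rule DERIV_cong)
    have dd: "Dn c x \<noteq> 0" using Dn_pos[OF c, of x] by simp
    show "(?G has_real_derivative (- (1 - c^2) * ((1 - c^2) / Dn c x) + (1 + c^2) + 2 * c * cos x) / (4 * c^2)) (at x)"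
      apply (auto intro!: derivative_eq_intros poisson_deriv_within[OF c])
      using False apply simp
      by (subst c2c4[OF False]) (simp add: algebra_simps)
    have d: "Dn c x \<noteq> 0" using Dn_pos[OF c, of x] by simp
    have s2: "(sin x)^2 = 1 - (cos x)^2" by (simp add: sin_squared_eq)
    have "(- (1 - c^2) * ((1 - c^2) / Dn c x) + (1 + c^2) + 2 * c * cos x) * Dn c x
        = 4 * c^2 * (sin x * sin x)"
      using d unfolding Dn_def by (simp add: field_simps power2_eq_square s2[unfolded power2_eq_square])
    then show "(- (1 - c^2) * ((1 - c^2) / Dn c x) + (1 + c^2) + 2 * c * cos x) / (4 * c^2)
        = sin x / Dn c x * sin (real 1 * x)"
      using d False by (simp add: field_simps)
  qed
  have "((\<lambda>x. sin x / Dn c x * sin (real 1 * x)) has_integral ?G pi - ?G 0) {0..pi}"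
    by (rule ftc_real[of 0 pi ?G], simp, rule der)
  moreover have "?G pi - ?G 0 = pi/2"
    using False by (simp add: PoisPhi_def field_simps power2_eq_square)
  ultimately show ?thesis using K_int[OF c, of 1] by (metis has_integral_unique)
qed


lemma Pint_val:
  assumes c: "\<bar>c\<bar> < 1" and m: "m \<ge> 1"
  shows "Pint c m = pi/2 * c^(m-1)"
proof (cases "c = 0")
  case True
  have "Dn c x = 1" for x using True by (simp add: Dn_def)
  then have "Pint c m = integral {0..pi} (\<lambda>x. sin x * sin (real m * x))" by (simp add: Pint_def)
  then have "Pint c m = (if m = 1 then pi/2 else 0)" using sinsin_int[OF m] by (simp add: integral_unique)
  then show ?thesis using True m by auto
next
  case False
  have "Pint c (k+1) = pi/2 * c^k \<and> Pint c (k+2) = pi/2 * c^(k+1)" for k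
  proof (induction k)
    case 0
    have r: "(1 + c^2) * Pint c 1 - c * (Pint c 2 + Pint c 0) = pi/2"
      using Pint_rec[OF c, of 1] by (simp add: numeral_2_eq_2)
    have "c * Pint c 2 = c * (pi/2 * c)" using r unfolding Pint_1[OF c] Pint_0
      by (simp add: algebra_simps power2_eq_square) metis
    then have "Pint c 2 = pi/2 * c" using False by (metis mult_cancel_left)
    then show ?case using Pint_1[OF c] by (simp add: numeral_2_eq_2)
  next
    case (Suc k)
    have r: "(1 + c^2) * Pint c (k+2) - c * (Pint c (k+3) + Pint c (k+1)) = 0"
      using Pint_rec[OF c, of "k+2"] by (simp add: numeral_eq_Suc)
    have "c * Pint c (k+3) = c * (pi/2 * c^(k+2))" using r unfolding Suc.IH[THEN conjunct1] Suc.IH[THEN conjunct2]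
      by (simp add: algebra_simps power2_eq_square) metis
    then have "Pint c (k+3) = pi/2 * c^(k+2)" using False by (metis mult_cancel_left)
    then show ?case using Suc.IH by (simp add: numeral_eq_Suc)
  qed
  from this[of "m-1"] m show ?thesis by simp
qed


definition Qint :: "real \<Rightarrow> nat \<Rightarrow> real" where
  "Qint c m = integral {0..pi/2} (\<lambda>x. sin x / Dn c x * sin (real m * x))"

lemma sin_m_refl: assumes "odd m" shows "sin (real m * (pi - y)) = sin (real m * y)"
proof -
  have "sin (real m * (pi - y)) = sin (real m * pi - real m * y)" by (simp add: algebra_simps)
  also have "\<dots> = sin (real m * y)" using assms by (simp add: sin_diff)
  finally show ?thesis .
qed

lemma Q_refl:
  assumes c: "\<bar>c\<bar> < 1" and m: "odd m"
  shows "Qint c m + Qint (-c) m = Pint c m"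
proof -
  let ?f = "\<lambda>x. sin x / Dn c x * sin (real m * x)"
  have cf: "continuous_on U ?f" for U by (rule cont_K[OF c])
  have dn0: "Dn c x \<noteq> 0" for x using Dn_pos[OF c, of x] by simp
  have comb: "integral {0..pi/2} ?f + integral {pi/2..pi} ?f = integral {0..pi} ?f"
    using integrable_continuous_real[OF cf] by (intro Henstock_Kurzweil_Integration.integral_combine) auto
  have sub: "((\<lambda>y. (-1) *\<^sub>R ?f (pi - y)) has_integral
      (integral {(\<lambda>y. pi - y) 0..(\<lambda>y. pi - y) (pi/2)} ?f - integral {(\<lambda>y. pi - y) (pi/2)..(\<lambda>y. pi - y) 0} ?f)) {0..pi/2}"
    by (rule has_integral_substitution_general[of "{}" 0 "pi/2" "\<lambda>y. pi - y" 0 pi ?f "\<lambda>_. -1"])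
       (use dn0 in \<open>auto intro!: derivative_eq_intros cf continuous_intros cont_Dn\<close>)
  have "((\<lambda>y. sin y / Dn (-c) y * sin (real m * y)) has_integral integral {pi/2..pi} ?f) {0..pi/2}"
  proof -
    have e: "(-1) *\<^sub>R ?f (pi - y) = - (sin y / Dn (-c) y * sin (real m * y))" for y
      using sin_m_refl[OF m, of y] by (simp add: Dn_def)
    from has_integral_neg[OF sub[unfolded e]] show ?thesis by simp
  qed
  then have "Qint (-c) m = integral {pi/2..pi} ?f" unfolding Qint_def by (rule integral_unique)
  then show ?thesis using comb unfolding Qint_def Pint_def by simp
qed



fun cheb :: "nat \<Rightarrow> complex poly" where
  "cheb 0 = 1"
| "cheb (Suc 0) = [:0, 1:]"
| "cheb (Suc (Suc n)) = [:0, 2:] * cheb (Suc n) - cheb n"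

lemma cheb_cos: "poly (cheb n) (cos z) = cos (of_nat n * z)"
proof (induction n rule: cheb.induct)
  case 1 then show ?case by simp
next
  case 2 then show ?case by simp
next
  case (3 n)
  have "cos (of_nat (Suc (Suc n)) * z) = 2 * cos z * cos (of_nat (Suc n) * z) - cos (of_nat n * z)"
  proof -
    have cr: "cos (b + z) = 2 * cos z * cos b - cos (b - z)" for b :: complex
      by (simp add: cos_add cos_diff)
    have a: "cos (of_nat (Suc (Suc n)) * z) = cos (of_nat (Suc n) * z + z)"
      "cos (of_nat n * z) = cos (of_nat (Suc n) * z - z)"
      by (simp_all add: algebra_simps)
    show ?thesis unfolding a by (rule cr)
  qed
  then show ?case using 3 by simp
qed

lemma cheb_degree: "degree (cheb n) \<le> n"
proof (induction n rule: cheb.induct)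
  case 1 then show ?case by simp
next
  case 2 then show ?case by simp
next
  case (3 n)
  have "degree ([:0, 2:] * cheb (Suc n)) \<le> Suc (Suc n)"
    using 3(1) degree_mult_le[of "[:0,2:]" "cheb (Suc n)"] by simp
  moreover have "degree (cheb n) \<le> Suc (Suc n)" using 3(2) by simp
  ultimately show ?case by (simp add: degree_diff_le)
qed

lemma cheb_deriv: "poly (pderiv (cheb n)) (cos z) * sin z = of_nat n * sin (of_nat n * z)"
proof -
  have d1: "((\<lambda>z. poly (cheb n) (cos z)) has_field_derivative poly (pderiv (cheb n)) (cos z) * (- sin z)) (at z)"
    by (rule DERIV_chain2[OF poly_DERIV]) (rule DERIV_cos)
  have d2: "((\<lambda>z. cos (of_nat n * z)) has_field_derivative - sin (of_nat n * z) * of_nat n) (at z)"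
    by (auto intro!: derivative_eq_intros)
  have "(\<lambda>z. poly (cheb n) (cos z)) = (\<lambda>z. cos (of_nat n * z))" by (simp add: cheb_cos)
  with d1 d2 have "poly (pderiv (cheb n)) (cos z) * (- sin z) = - sin (of_nat n * z) * of_nat n"
    using DERIV_unique by metis
  then show ?thesis by (simp add: algebra_simps)
qed


lemma pf_general:
  fixes p :: "complex poly" and r :: "nat \<Rightarrow> complex"
  assumes deg: "degree p \<le> n" and n: "n \<ge> 1" and inj: "inj_on r {..<n}"
    and roots: "\<And>k. k < n \<Longrightarrow> poly p (r k) = 0"
    and d: "\<And>k. k < n \<Longrightarrow> poly (pderiv p) (r k) \<noteq> 0"
    and w: "w \<notin> r ` {..<n}"
  shows "poly p w * (\<Sum>k<n. 1 / (poly (pderiv p) (r k) * (w - r k))) = 1"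
proof -
  define s where "s k = p div [:- r k, 1:]" for k
  have ps: "p = [:- r k, 1:] * s k" if "k < n" for k
    using roots[OF that] unfolding s_def poly_eq_0_iff_dvd by (rule dvd_mult_div_cancel[symmetric])
  have p0: "p \<noteq> 0" using d[of 0] n by auto
  have s0: "s k \<noteq> 0" if "k < n" for k using ps[OF that] p0 by auto
  have degs: "degree (s k) \<le> n - 1" if "k < n" for k
  proof -
    have "degree p = degree [:- r k, 1:] + degree (s k)"
      using ps[OF that] s0[OF that] by (metis degree_mult_eq pCons_eq_0_iff zero_neq_one)
    then show ?thesis using deg by simp
  qed
  have skk: "poly (s k) (r k) = poly (pderiv p) (r k)" if "k < n" for k
  proof -
    have "pderiv p = [:- r k, 1:] * pderiv (s k) + s k * pderiv [:- r k, 1:]"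
      by (subst ps[OF that]) (rule pderiv_mult)
    then show ?thesis by (simp add: pderiv_pCons)
  qed
  have skj: "poly (s k) (r j) = 0" if "k < n" "j < n" "j \<noteq> k" for j k
  proof -
    have "r j \<noteq> r k" using inj that by (auto dest: inj_onD)
    moreover have "poly p (r j) = (r j - r k) * poly (s k) (r j)"
      by (subst ps[OF that(1)]) (simp add: algebra_simps)
    ultimately show ?thesis using roots[OF that(2)] by simp
  qed
  define q where "q = (\<Sum>k<n. smult (1 / poly (pderiv p) (r k)) (s k))"
  have degq: "degree q \<le> n - 1" unfolding q_def
    by (rule degree_sum_le) (auto intro: order_trans[OF degree_smult_le] degs[simplified])
  have qr: "poly q (r j) = 1" if "j < n" for j
  proof -
    have "poly q (r j) = (\<Sum>k<n. poly (s k) (r j) / poly (pderiv p) (r k))"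
      unfolding q_def poly_sum by simp
    also have "\<dots> = (\<Sum>k<n. if k = j then 1 else 0)"
      by (rule sum.cong) (use skj skk d that in auto)
    also have "\<dots> = 1" using that by simp
    finally show ?thesis .
  qed
  have q1: "q = 1"
  proof (rule poly_eqI_degree[of "r ` {..<n}"])
    show "\<And>x. x \<in> r ` {..<n} \<Longrightarrow> poly q x = poly 1 x" using qr by auto
    have "card (r ` {..<n}) = n" using inj by (simp add: card_image)
    then show "degree q < card (r ` {..<n})" "degree 1 < card (r ` {..<n})" using degq n by auto
  qed
  have "1 = poly q w" using q1 by simp
  also have "\<dots> = (\<Sum>k<n. poly (s k) w / poly (pderiv p) (r k))" unfolding q_def poly_sum by simp
  also have "\<dots> = (\<Sum>k<n. poly p w * (1 / (poly (pderiv p) (r k) * (w - r k))))"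
  proof (rule sum.cong)
    fix k assume k: "k \<in> {..<n}"
    have wr: "w - r k \<noteq> 0" using w k by auto
    have "poly p w = (w - r k) * poly (s k) w" by (subst ps) (use k in \<open>auto simp: algebra_simps\<close>)
    then have sw: "poly (s k) w = poly p w / (w - r k)" using wr by (simp add: eq_divide_eq mult.commute)
    show "poly (s k) w / poly (pderiv p) (r k) = poly p w * (1 / (poly (pderiv p) (r k) * (w - r k)))"
      using d[of k] k wr by (simp add: sw field_simps)
  qed simp
  also have "\<dots> = poly p w * (\<Sum>k<n. 1 / (poly (pderiv p) (r k) * (w - r k)))"
    by (simp add: sum_distrib_left)
  finally show ?thesis by simp
qed


definition phi :: "nat \<Rightarrow> nat \<Rightarrow> real" where
  "phi n k = pi * (2 * real k + 1) / (2 * real n)"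

lemma phi_range: assumes "k < n" shows "0 < phi n k" "phi n k < pi"
proof -
  have n: "real n > 0" using assms by simp
  show "0 < phi n k" unfolding phi_def using n by (simp add: pi_gt_zero)
  have "2 * real k + 1 < 2 * real n" using assms by linarith
  then have "(2 * real k + 1) / (2 * real n) < 1" using n by simp
  then have "pi * ((2 * real k + 1) / (2 * real n)) < pi * 1" by (intro mult_strict_left_mono) auto
  then show "phi n k < pi" unfolding phi_def by simp
qed

lemma sin_phi_pos: assumes "k < n" shows "sin (phi n k) > 0"
  using phi_range[OF assms] by (intro sin_gt_zero) auto

lemma n_phi: assumes "n > 0" shows "real n * phi n k = real k * pi + pi/2"
  using assms unfolding phi_def by (simp add: field_simps)

lemma cos_nphi: assumes "n > 0" shows "cos (real n * phi n k) = 0"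
  unfolding n_phi[OF assms] by (simp add: cos_add)

lemma sin_nphi: assumes "n > 0" shows "sin (real n * phi n k) = (-1)^k"
  unfolding n_phi[OF assms] by (simp add: sin_add)

lemma phi_inj: assumes "n > 0" shows "inj_on (\<lambda>k. complex_of_real (cos (phi n k))) {..<n}"
proof (rule inj_onI)
  fix k l assume k: "k \<in> {..<n}" and l: "l \<in> {..<n}"
    and e: "complex_of_real (cos (phi n k)) = complex_of_real (cos (phi n l))"
  have e': "cos (phi n k) = cos (phi n l)" using e by (simp only: of_real_eq_iff)
  have rk: "0 \<le> phi n k" "phi n k \<le> pi" using phi_range[of k n] k by auto
  have rl: "0 \<le> phi n l" "phi n l \<le> pi" using phi_range[of l n] l by auto
  have "phi n k = phi n l" by (rule cos_inj_pi[OF rk rl e'])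
  then have "real n * phi n k = real n * phi n l" by simp
  then have "real k * pi = real l * pi" unfolding n_phi[OF assms] by simp
  then show "k = l" by simp
qed

lemma cheb_root: assumes "n > 0" shows "poly (cheb n) (complex_of_real (cos (phi n k))) = 0"
proof -
  have "poly (cheb n) (complex_of_real (cos (phi n k))) = cos (of_nat n * complex_of_real (phi n k))"
    using cheb_cos[of n "complex_of_real (phi n k)"] by (simp add: cos_of_real)
  also have "of_nat n * complex_of_real (phi n k) = complex_of_real (real n * phi n k)" by simp
  also have "cos \<dots> = 0" by (simp only: cos_of_real cos_nphi[OF assms]) simp
  finally show ?thesis .
qed

lemma cheb_dval: assumes "k < n"
  shows "poly (pderiv (cheb n)) (complex_of_real (cos (phi n k))) = complex_of_real (real n * (-1)^k / sin (phi n k))"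
proof -
  have n: "n > 0" using assms by simp
  have sp: "sin (phi n k) > 0" using phi_range[OF assms] by (intro sin_gt_zero) auto
  have "poly (pderiv (cheb n)) (cos (complex_of_real (phi n k))) * sin (complex_of_real (phi n k))
     = of_nat n * sin (of_nat n * complex_of_real (phi n k))" by (rule cheb_deriv)
  also have "of_nat n * complex_of_real (phi n k) = complex_of_real (real n * phi n k)" by simp
  finally have "poly (pderiv (cheb n)) (complex_of_real (cos (phi n k))) * complex_of_real (sin (phi n k))
     = complex_of_real (real n * (-1)^k)"
    by (simp only: cos_of_real sin_of_real sin_nphi[OF n]) simp
  then show ?thesis using sp by (simp add: field_simps)
qed

lemma pf_cheb:
  assumes n: "n > 0" and w: "w \<notin> (\<lambda>k. complex_of_real (cos (phi n k))) ` {..<n}"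
  shows "poly (cheb n) w * (\<Sum>k<n. complex_of_real ((-1)^k * sin (phi n k) / real n) / (w - complex_of_real (cos (phi n k)))) = 1"
proof -
  have "poly (cheb n) w * (\<Sum>k<n. 1 / (poly (pderiv (cheb n)) (complex_of_real (cos (phi n k))) * (w - complex_of_real (cos (phi n k))))) = 1"
    by (rule pf_general[OF cheb_degree]) (use n w phi_inj[OF n] cheb_root[OF n] cheb_dval sin_phi_pos in \<open>fastforce+\<close>)
  moreover have eq: "1 / (poly (pderiv (cheb n)) (complex_of_real (cos (phi n k))) * (w - complex_of_real (cos (phi n k))))
     = complex_of_real ((-1)^k * sin (phi n k) / real n) / (w - complex_of_real (cos (phi n k)))" if "k < n" for k
  proof -
    have r: "1 / (real n * (-1)^k / sin (phi n k)) = (-1)^k * sin (phi n k) / real n"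
      by (cases "even k") auto
    have g: "1 / (complex_of_real X * B) = complex_of_real (1 / X) / B" for X B
      by (simp add: divide_inverse inverse_mult_distrib of_real_inverse)
    show ?thesis unfolding cheb_dval[OF that] g r ..
  qed
  moreover have "(\<Sum>k<n. 1 / (poly (pderiv (cheb n)) (complex_of_real (cos (phi n k))) * (w - complex_of_real (cos (phi n k)))))
    = (\<Sum>k<n. complex_of_real ((-1)^k * sin (phi n k) / real n) / (w - complex_of_real (cos (phi n k))))"
    by (rule sum.cong) (auto simp: eq)
  ultimately show ?thesis by simp
qed

lemma cos_Complex: "cos (Complex a b) = Complex (cos a * cosh b) (- (sin a * sinh b))"
  by (rule complex_eqI) (simp_all add: Re_cos Im_cos cosh_def sinh_def field_simps)


definition Fth :: "nat \<Rightarrow> real \<Rightarrow> real" where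
  "Fth n x = (1 / (2 * real n)) * (\<Sum>k<n. (-1)^k * sin (phi n k) * (sin x / Dn (cos (phi n k)) x))"

lemma Dn_eq2: "(cos x - c)^2 + (sin x)^2 = Dn c x"
proof -
  have "(cos x - c)^2 + (sin x)^2 = ((sin x)^2 + (cos x)^2) - 2 * c * cos x + c^2"
    by (simp add: power2_eq_square algebra_simps)
  then show ?thesis by (simp add: Dn_def)
qed

lemma cosh_sinh_id: fixes A B :: real
  shows "(cos A * cosh B)^2 + (sin A * sinh B)^2 = (cos (2*A) + cosh (2*B)) / 2"
proof -
  have "(cos A * cosh B)^2 + (sin A * sinh B)^2 = (cos A)^2 * (cosh B)^2 + (1 - (cos A)^2) * ((cosh B)^2 - 1)"
    by (simp add: power_mult_distrib sin_squared_eq sinh_square_eq)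
  also have "\<dots> = (cos A)^2 + (cosh B)^2 - 1" by (simp add: algebra_simps)
  also have "\<dots> = (cos (2*A) + cosh (2*B)) / 2" by (simp add: cos_double_cos cosh_double_cosh)
  finally show ?thesis .
qed

lemma cos_phi_lt1: assumes "k < n" shows "cos (phi n k) < 1"
proof -
  have "cos (phi n k) < cos 0"
    using phi_range[OF assms] by (intro cos_monotone_0_pi) auto
  then show ?thesis by simp
qed


lemma key:
  assumes n: "n > 0" and t0: "0 \<le> t" and t1: "t \<le> 1"
  shows "sin (real n * arcsin (sqrt t)) * sinh (real n * arsinh (sqrt t))
          / (cos (2 * real n * arcsin (sqrt t)) + cosh (2 * real n * arsinh (sqrt t))) = Fth n (arcsin t)"
proof -
  define x where "x = sqrt t"
  define a where "a = arcsin x"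
  define b where "b = arsinh x"
  define th where "th = arcsin t"
  define A where "A = real n * a"
  define B where "B = real n * b"
  have x0: "0 \<le> x" "x \<le> 1" using t0 t1 by (auto simp: x_def)
  have x2: "x^2 = t" using t0 by (simp add: x_def)
  have sa: "sin a = x" unfolding a_def using x0 by (intro sin_arcsin) auto
  have ca: "cos a = sqrt (1 - t)" unfolding a_def using x0 x2 by (subst cos_arcsin) auto
  have sb: "sinh b = x" unfolding b_def by simp
  have cb: "cosh b = sqrt (t + 1)" unfolding b_def using x2 by (simp add: cosh_arsinh_real)
  have st: "sin th = t" unfolding th_def using t0 t1 by (intro sin_arcsin) auto
  have ct: "cos th = sqrt (1 - t^2)" unfolding th_def using t0 t1 by (subst cos_arcsin) auto
  have sq: "sqrt (1 - t) * sqrt (t + 1) = sqrt (1 - t^2)"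
    by (simp add: real_sqrt_mult[symmetric] power2_eq_square algebra_simps)
  define w where "w = Complex (cos th) (- sin th)"
  have w_eq: "cos (Complex a b) = w"
    unfolding cos_Complex w_def ca cb sa sb ct st sq using x2 by (simp add: power2_eq_square)
  define C where "C = Complex (cos A * cosh B) (- (sin A * sinh B))"
  have C_eq: "poly (cheb n) w = C"
  proof -
    have "of_nat n * Complex a b = Complex A B" by (simp add: A_def B_def complex_eq_iff)
    then show ?thesis using cheb_cos[of n "Complex a b"] unfolding w_eq C_def by (simp add: cos_Complex)
  qed
  have wnot: "w \<notin> (\<lambda>k. complex_of_real (cos (phi n k))) ` {..<n}"
  proof
    assume "w \<in> (\<lambda>k. complex_of_real (cos (phi n k))) ` {..<n}"
    then obtain k where k: "k < n" and wk: "w = complex_of_real (cos (phi n k))" by auto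
    have "Im w = 0" using wk by simp
    then have "t = 0" using st by (simp add: w_def)
    then have "Re w = 1" using ct by (simp add: w_def)
    then have "cos (phi n k) = 1" using wk by simp
    then show False using cos_phi_lt1[OF k] by simp
  qed
  define \<Sigma> where "\<Sigma> = (\<Sum>k<n. complex_of_real ((-1)^k * sin (phi n k) / real n) / (w - complex_of_real (cos (phi n k))))"
  have pf: "C * \<Sigma> = 1" using pf_cheb[OF n wnot] unfolding C_eq \<Sigma>_def .
  have Im1: "Im \<Sigma> = 2 * Fth n th"
  proof -
    have "Im \<Sigma> = (\<Sum>k<n. Im (complex_of_real ((-1)^k * sin (phi n k) / real n) / (w - complex_of_real (cos (phi n k)))))"
      unfolding \<Sigma>_def by (simp add: Im_sum)
    also have "\<dots> = (\<Sum>k<n. (-1)^k * sin (phi n k) / real n * (sin th / Dn (cos (phi n k)) th))"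
    proof (rule sum.cong)
      fix k
      have d: "(cos th - cos (phi n k))^2 + (sin th)^2 = Dn (cos (phi n k)) th" by (rule Dn_eq2)
      show "Im (complex_of_real ((-1)^k * sin (phi n k) / real n) / (w - complex_of_real (cos (phi n k))))
          = (-1)^k * sin (phi n k) / real n * (sin th / Dn (cos (phi n k)) th)"
        unfolding Im_divide using d by (simp add: w_def)
    qed simp
    also have "\<dots> = 2 * Fth n th" unfolding Fth_def using n
      by (simp add: sum_distrib_left algebra_simps)
    finally show ?thesis .
  qed
  have C0: "C \<noteq> 0" using pf by auto
  have "\<Sigma> = 1 / C" using pf C0 by (simp add: field_simps)
  then have "Im \<Sigma> = sin A * sinh B / ((cos A * cosh B)^2 + (sin A * sinh B)^2)"
    by (simp add: Im_divide C_def)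
  also have "\<dots> = 2 * (sin A * sinh B / (cos (2*A) + cosh (2*B)))"
    unfolding cosh_sinh_id by simp
  finally have "sin A * sinh B / (cos (2*A) + cosh (2*B)) = Fth n th" using Im1 by simp
  then show ?thesis unfolding A_def B_def a_def b_def x_def th_def by (simp add: mult.assoc)
qed


lemma abs_cos_phi: assumes "k < n" shows "\<bar>cos (phi n k)\<bar> < 1"
proof -
  have "cos pi < cos (phi n k)"
    using phi_range[OF assms] by (intro cos_monotone_0_pi) auto
  then show ?thesis using cos_phi_lt1[OF assms] by auto
qed

lemma phi_refl: assumes n: "n > 0" and k: "k < n" shows "phi n (n - Suc k) = pi - phi n k"
proof -
  have "real n * phi n (n - Suc k) = real (n - Suc k) * pi + pi/2" by (rule n_phi[OF n])
  also have "real (n - Suc k) = real n - real k - 1" using k by (simp add: of_nat_diff)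
  finally have "real n * phi n (n - Suc k) = real n * (pi - phi n k)"
    using n_phi[OF n, of k] by (simp add: algebra_simps)
  then show ?thesis using n by simp
qed

lemma sign_refl: assumes "odd n" "k < n" shows "(-1::real)^(n - Suc k) = (-1)^k"
proof -
  have "even (n - Suc k) = even k" using assms by presburger
  then show ?thesis by (cases "even k") (simp_all add: minus_one_power_iff)
qed

lemma alpha_refl: assumes "odd n" "k < n"
  shows "(-1::real)^(n - Suc k) * sin (phi n (n - Suc k)) = (-1)^k * sin (phi n k)"
  using assms sign_refl[OF assms] phi_refl[of n k] by (simp add: sin_diff)

lemma c_refl: assumes "n > 0" "k < n" shows "cos (phi n (n - Suc k)) = - cos (phi n k)"
  using phi_refl[OF assms] by (simp add: cos_diff)

lemma theta_int:
  assumes n: "n > 0"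
  shows "((\<lambda>x. Fth n x * sin (real m * x)) has_integral
     (1 / (2 * real n)) * (\<Sum>k<n. (-1)^k * sin (phi n k) * Qint (cos (phi n k)) m)) {0..pi/2}"
proof -
  have q: "((\<lambda>x. sin x / Dn (cos (phi n k)) x * sin (real m * x)) has_integral Qint (cos (phi n k)) m) {0..pi/2}"
    if "k < n" for k
    unfolding Qint_def
    by (rule integrable_integral, rule integrable_continuous_real, rule cont_K[OF abs_cos_phi[OF that]])
  have q': "((\<lambda>x. (-1)^k * sin (phi n k) * (sin x / Dn (cos (phi n k)) x * sin (real m * x))) has_integral
     (-1)^k * sin (phi n k) * Qint (cos (phi n k)) m) {0..pi/2}" if "k < n" for k
    by (rule has_integral_mult_right[OF q[OF that]])
  have "((\<lambda>x. (\<Sum>k<n. (-1)^k * sin (phi n k) * (sin x / Dn (cos (phi n k)) x * sin (real m * x))))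
     has_integral (\<Sum>k<n. (-1)^k * sin (phi n k) * Qint (cos (phi n k)) m)) {0..pi/2}"
    by (rule has_integral_sum[OF finite_lessThan]) (rule q', simp)
  from has_integral_mult_right[OF this, of "1 / (2 * real n)"]
  have "((\<lambda>x. (1 / (2 * real n)) * (\<Sum>k<n. (-1)^k * sin (phi n k) * (sin x / Dn (cos (phi n k)) x * sin (real m * x))))
     has_integral (1 / (2 * real n)) * (\<Sum>k<n. (-1)^k * sin (phi n k) * Qint (cos (phi n k)) m)) {0..pi/2}" .
  moreover have "(1 / (2 * real n)) * (\<Sum>k<n. (-1)^k * sin (phi n k) * (sin x / Dn (cos (phi n k)) x * sin (real m * x)))
      = Fth n x * sin (real m * x)" for x
    unfolding Fth_def mult.assoc[of "1 / (2 * real n)"] sum_distrib_right by (simp add: mult.assoc)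
  ultimately show ?thesis by simp
qed

lemma sum_Q:
  assumes n: "odd n" and m: "odd m"
  shows "(\<Sum>k<n. (-1)^k * sin (phi n k) * Qint (cos (phi n k)) m)
       = pi/4 * (\<Sum>k<n. (-1)^k * sin (phi n k) * cos (phi n k) ^ (m - 1))"
proof -
  have n0: "n > 0" using n by (intro odd_pos)
  let ?a = "\<lambda>k. (-1::real)^k * sin (phi n k)"
  have "(\<Sum>k<n. ?a k * Qint (cos (phi n k)) m) = (\<Sum>k<n. ?a (n - Suc k) * Qint (cos (phi n (n - Suc k))) m)"
    by (rule sum.nat_diff_reindex[symmetric])
  also have "\<dots> = (\<Sum>k<n. ?a k * Qint (- cos (phi n k)) m)"
    by (rule sum.cong) (use alpha_refl[OF n] c_refl[OF n0] in auto)
  finally have r: "(\<Sum>k<n. ?a k * Qint (cos (phi n k)) m) = (\<Sum>k<n. ?a k * Qint (- cos (phi n k)) m)" .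
  have "2 * (\<Sum>k<n. ?a k * Qint (cos (phi n k)) m)
      = (\<Sum>k<n. ?a k * (Qint (cos (phi n k)) m + Qint (- cos (phi n k)) m))"
    using r by (simp add: algebra_simps sum.distrib)
  also have "\<dots> = (\<Sum>k<n. ?a k * (pi/2 * cos (phi n k) ^ (m - 1)))"
  proof (rule sum.cong)
    fix k assume "k \<in> {..<n}"
    then have k: "k < n" by simp
    have m1: "m \<ge> 1" using m by (cases m) auto
    show "?a k * (Qint (cos (phi n k)) m + Qint (- cos (phi n k)) m) = ?a k * (pi/2 * cos (phi n k) ^ (m - 1))"
      using Q_refl[OF abs_cos_phi[OF k] m] Pint_val[OF abs_cos_phi[OF k] m1] by simp
  qed simp
  also have "\<dots> = pi/2 * (\<Sum>k<n. ?a k * cos (phi n k) ^ (m - 1))"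
    by (simp add: sum_distrib_left algebra_simps)
  finally show ?thesis by linarith
qed

lemma sum_S:
  assumes n: "odd n" and m: "odd m" "m > 1"
  shows "(\<Sum>k<n. (-1)^k * sin (phi n k) * cos (phi n k) ^ (m - 1)) = 2 * S n m"
proof -
  have n0: "n > 0" using n by (intro odd_pos)
  define h where "h = (n - 1) div 2"
  have nh: "n = 2 * h + 1" using n unfolding h_def by presburger
  define f where "f k = (-1::real)^k * sin (phi n k) * cos (phi n k) ^ (m - 1)" for k
  have S_eq: "S n m = (\<Sum>k\<in>{..h}. f k)"
    unfolding S_def f_def phi_def h_def by (simp add: atLeast0AtMost)
  have fsym: "f (n - Suc k) = f k" if "k < n" for k
  proof -
    have "even (m - 1)" using m by presburger
    then show ?thesis unfolding f_def using alpha_refl[OF n that] c_refl[OF n0 that]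
      by (simp add: power_minus_even)
  qed
  have fh: "f h = 0"
  proof -
    have p: "phi n h = pi/2" unfolding phi_def using nh by (simp add: field_simps)
    have "cos (phi n h) = 0" by (simp add: p)
    then show ?thesis unfolding f_def using m by simp
  qed
  have split: "{..<n} = {..h} \<union> {h+1..<n}" using nh by auto
  have "(\<Sum>k<n. f k) = (\<Sum>k\<in>{..h}. f k) + (\<Sum>k\<in>{h+1..<n}. f k)"
    unfolding split by (rule sum.union_disjoint) auto
  moreover have "(\<Sum>k\<in>{h+1..<n}. f k) = (\<Sum>k\<in>{..<h}. f k)"
    by (rule sum.reindex_bij_witness[where i="\<lambda>k. n - Suc k" and j="\<lambda>k. n - Suc k"])
      (use nh fsym in auto)
  moreover have "(\<Sum>k\<in>{..h}. f k) = (\<Sum>k\<in>{..<h}. f k) + f h"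
    by (simp add: lessThan_Suc_atMost[symmetric])
  ultimately have "(\<Sum>k<n. f k) = 2 * (\<Sum>k\<in>{..h}. f k)" using fh by simp
  then show ?thesis unfolding S_eq f_def .
qed

theorem mainTheorem13:
  fixes n m :: nat
  assumes "n > 0" and "odd n" and "m > 1" and "odd m"
  shows "((\<lambda>t::real.
            (sin (real n * arcsin (sqrt t)) * sinh (real n * arsinh (sqrt t))
              / (cos (2 * real n * arcsin (sqrt t)) + cosh (2 * real n * arsinh (sqrt t))))
            * (sin (real m * arcsin t) / sqrt (1 - t^2)))
          has_integral (pi / (4 * real n) * S n m)) {0..1}"
proof -
  note n0 = assms(1)
  define h where "h = (\<lambda>x. Fth n x * sin (real m * x))"
  have hint: "(h has_integral pi / (4 * real n) * S n m) {0..pi/2}"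
  proof -
    have "(h has_integral (1 / (2 * real n)) * (pi/4 * (2 * S n m))) {0..pi/2}"
      using theta_int[OF n0, of m] unfolding h_def sum_Q[OF assms(2,4)] sum_S[OF assms(2,4,3)] .
    moreover have "(1 / (2 * real n)) * (pi/4 * (2 * S n m)) = pi / (4 * real n) * S n m"
      using n0 by (simp add: field_simps)
    ultimately show ?thesis by simp
  qed
  have dn0: "Dn (cos (phi n k)) x \<noteq> 0" if "k < n" for k x
    using Dn_pos[OF abs_cos_phi[OF that], of x] by simp
  have hcont: "continuous_on {0..pi/2} h"
    unfolding h_def Fth_def
    by (intro continuous_intros continuous_on_sum cont_Dn) (use dn0 in auto)
  have sub: "((\<lambda>t. inverse (sqrt (1 - t^2)) *\<^sub>R h (arcsin t)) has_integral
      (integral {arcsin 0..arcsin 1} h - integral {arcsin 1..arcsin 0} h)) {0..1}"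
  proof (rule has_integral_substitution_general[of "{1}" 0 1 arcsin 0 "pi/2" h])
    show "arcsin ` {0..1} \<subseteq> {0..pi/2}" using arcsin_nonneg arcsin_ubound by fastforce
    show "continuous_on {0..pi/2} h" by (rule hcont)
    show "continuous_on {0..1} arcsin"
      by (rule continuous_on_subset[OF continuous_on_arcsin']) auto
    fix x :: real assume "x \<in> {0..1} - {1}"
    then have "-1 < x" "x < 1" by auto
    from DERIV_arcsin[OF this] show "(arcsin has_real_derivative inverse (sqrt (1 - x^2))) (at x within {0..1})"
      by (rule has_field_derivative_at_within)
  qed auto
  have "integral {arcsin 0..arcsin 1} h - integral {arcsin 1..arcsin 0} h = pi / (4 * real n) * S n m"
    using integral_unique[OF hint] by simp
  with sub have sub': "((\<lambda>t. inverse (sqrt (1 - t^2)) *\<^sub>R h (arcsin t)) has_integral pi / (4 * real n) * S n m) {0..1}"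
    by simp
  show ?thesis
  proof (rule has_integral_eq[OF _ sub'])
    fix t :: real assume "t \<in> {0..1}"
    then have t: "0 \<le> t" "t \<le> 1" by auto
    show "inverse (sqrt (1 - t^2)) *\<^sub>R h (arcsin t) =
      (sin (real n * arcsin (sqrt t)) * sinh (real n * arsinh (sqrt t))
              / (cos (2 * real n * arcsin (sqrt t)) + cosh (2 * real n * arsinh (sqrt t))))
            * (sin (real m * arcsin t) / sqrt (1 - t^2))"
      unfolding key[OF n0 t] h_def by (simp add: divide_inverse)
  qed
qed

end
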